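(* In the dyadic setting, suppose there are no covariates, the treatment $Y_{21}$ and the negative control exposure $Z$ are binary, Assumptions (L), (NC) hold, and Assumption (B) holds with a linear bridge $h(W,Y_{21};\gamma)=\gamma_0+\gamma_1W+\gamma_2Y_{21}$. Suppose moreover $\mathbb{E}(\mathrm{OD}_{WZ\mid Y_{21}})\neq 0$. Then $$\tau(1,0)=\mathbb{E}(\mathrm{OD}_{Y_{12}Y_{21}\mid Z})-\mathbb{E}(\mathrm{OD}_{WY_{21}\mid Z})\times\frac{\mathbb{E}(\mathrm{OD}_{Y_{12}Z\mid Y_{21}})}{\mathbb{E}(\mathrm{OD}_{WZ\mid Y_{21}})},$$ where for random variables $V_1,V_2,V_3$ with $V_2$ binary, $\mathrm{OD}_{V_1V_2\mid V_3}=\mathbb{E}(V_1\mid V_2=1,V_3,S=1)-\mathbb{E}(V_1\mid V_2=0,V_3,S=1)$ and the outer expectations are taken over the distribution of the conditioning variable given $S=1$.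
   Context: Dyadic setting: each observation is a pair (dyad) of units $k\in\{1,2\}$; $S=1$ if connected, and all analysis is conditional on $S=1$. $Y_{kt}$ is the focal behavior of unit $k$ at time $t\in\{1,2\}$; outcome $Y_{12}$, treatment $Y_{21}$; potential outcomes $Y_{12}(y_{21})$ with consistency $Y_{12}=Y_{12}(Y_{21})$ a.s.; $U$ unobserved; $W$, $Z$ observed auxiliary variables. ACPE: $\tau(y_{21},y_{21}')=\mathbb{E}\{Y_{12}(y_{21})-Y_{12}(y_{21}')\mid S=1\}$. Assumption (L): for all $y_{21}$, $Y_{12}(y_{21})\perp\!\!\!\perp Y_{21}\mid U,S=1$. Assumption (NC): $W\perp\!\!\!\perp Y_{21}\mid U,S=1$; $Z\perp\!\!\!\perp Y_{12}\mid Y_{21},U,S=1$; $Z\perp\!\!\!\perp W\mid Y_{21},U,S=1$. Assumption (B): for all $y_{21}$, $\mathbb{E}(Y_{12}\mid Y_{21}=y_{21},U,S=1)=\mathbb{E}\{h(W,y_{21})\mid Y_{21}=y_{21},U,S=1\}$ for the given function $h$. *)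

theory Defs
  imports "HOL-Probability.Probability"
begin

text \<open>All probabilities/expectations are taken under the measure M, which plays the
role of the law conditional on S = 1 (all analysis is conditional on S = 1).\<close>

definition gen_sigma :: "'a measure \<Rightarrow> ('a \<Rightarrow> 'c) \<Rightarrow> 'c measure \<Rightarrow> 'a measure" where
  "gen_sigma M C MC = vimage_algebra (space M) C MC"

definition cexp :: "'a measure \<Rightarrow> ('a \<Rightarrow> real) \<Rightarrow> ('a \<Rightarrow> 'c) \<Rightarrow> 'c measure \<Rightarrow> 'a \<Rightarrow> real" where
  "cexp M X C MC = real_cond_exp M (gen_sigma M C MC) X"

definition cond_indep ::
  "'a measure \<Rightarrow> ('a \<Rightarrow> 'b) \<Rightarrow> 'b measure \<Rightarrow> ('a \<Rightarrow> 'd) \<Rightarrow> 'd measure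
     \<Rightarrow> ('a \<Rightarrow> 'c) \<Rightarrow> 'c measure \<Rightarrow> bool" where
  "cond_indep M A MA B MB C MC \<longleftrightarrow>
     (\<forall>a\<in>sets MA. \<forall>b\<in>sets MB.
        AE x in M. cexp M (indicator {y\<in>space M. A y \<in> a \<and> B y \<in> b}) C MC x
                   = cexp M (indicator {y\<in>space M. A y \<in> a}) C MC x
                     * cexp M (indicator {y\<in>space M. B y \<in> b}) C MC x)"

definition cexp_event :: "'a measure \<Rightarrow> ('a \<Rightarrow> real) \<Rightarrow> 'a set \<Rightarrow> real" where
  "cexp_event M X A = (\<integral>x. indicator A x * X x \<partial>M) / measure M A"

definition OD :: "'a measure \<Rightarrow> ('a \<Rightarrow> real) \<Rightarrow> ('a \<Rightarrow> real) \<Rightarrow> ('a \<Rightarrow> real) \<Rightarrow> real \<Rightarrow> real" where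
  "OD M V1 V2 V3 v =
     cexp_event M V1 {x\<in>space M. V2 x = 1 \<and> V3 x = v}
   - cexp_event M V1 {x\<in>space M. V2 x = 0 \<and> V3 x = v}"

definition expected_OD :: "'a measure \<Rightarrow> ('a \<Rightarrow> real) \<Rightarrow> ('a \<Rightarrow> real) \<Rightarrow> ('a \<Rightarrow> real) \<Rightarrow> real" where
  "expected_OD M V1 V2 V3 =
     (\<Sum>v\<in>{0,1}. measure M {x\<in>space M. V3 x = v} * OD M V1 V2 V3 v)"

definition ACPE :: "'a measure \<Rightarrow> (real \<Rightarrow> 'a \<Rightarrow> real) \<Rightarrow> real \<Rightarrow> real \<Rightarrow> real" where
  "ACPE M Y12p y y' = (\<integral>x. Y12p y x - Y12p y' x \<partial>M)"

end

theory Submission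
  imports Defs
begin

lemma zero_extend:
  fixes X h :: "'a \<Rightarrow> real"
  assumes fm: "finite_measure M"
    and X[measurable]: "X \<in> borel_measurable M" and iX: "integrable M X"
    and h[measurable]: "h \<in> borel_measurable M" and hb: "AE x in M. \<bar>h x\<bar> \<le> 1"
    and orth: "\<And>a. a \<in> sets borel \<Longrightarrow> (\<integral>x. indicator (X -` a \<inter> space M) x * h x \<partial>M) = 0"
  shows "(\<integral>x. X x * h x \<partial>M) = 0"
proof -
  interpret finite_measure M by (rule fm)
  define hp where "hp = (\<lambda>x. max (h x) 0)"
  define hm where "hm = (\<lambda>x. max (- h x) 0)"
  have [measurable]: "hp \<in> borel_measurable M" "hm \<in> borel_measurable M"
    unfolding hp_def hm_def by measurable
  have ihp: "integrable M hp" "integrable M hm"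
    by (rule integrable_const_bound[where B=1]; (use hb in \<open>auto simp: hp_def hm_def\<close>))+
  have iXhp: "integrable M (\<lambda>x. X x * hp x)" "integrable M (\<lambda>x. X x * hm x)"
  proof -
    have b: "\<bar>X x\<bar> * max (g x) 0 \<le> \<bar>X x\<bar>" if "\<bar>g x\<bar> \<le> 1" for x and g :: "'a \<Rightarrow> real"
      using that by (simp add: mult_left_le max_def)
    show "integrable M (\<lambda>x. X x * hp x)"
      apply (rule Bochner_Integration.integrable_bound[OF iX]) apply simp
      using hb by eventually_elim (auto simp: hp_def abs_mult intro: b)
    show "integrable M (\<lambda>x. X x * hm x)"
      apply (rule Bochner_Integration.integrable_bound[OF iX]) apply simp
      using hb by eventually_elim (auto simp: hm_def abs_mult intro!: b[where g="\<lambda>x. - h x"])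
  qed
  define N1 where "N1 = distr (density M (\<lambda>x. ennreal (hp x))) borel X"
  define N2 where "N2 = distr (density M (\<lambda>x. ennreal (hm x))) borel X"
  have "N1 = N2"
  proof (rule measure_eqI)
    show "sets N1 = sets N2" by (simp add: N1_def N2_def)
    fix a assume a: "a \<in> sets N1"
    then have a': "a \<in> sets borel" by (simp add: N1_def)
    have S: "X -` a \<inter> space M \<in> sets M" using a' by measurable
    have i1: "integrable M (\<lambda>x. indicator (X -` a \<inter> space M) x * hp x)"
      "integrable M (\<lambda>x. indicator (X -` a \<inter> space M) x * hm x)"
      using integrable_real_mult_indicator[OF S ihp(1)] integrable_real_mult_indicator[OF S ihp(2)]
      by (simp_all add: mult.commute)
    have "(\<integral>x. indicator (X -` a \<inter> space M) x * hp x \<partial>M) - (\<integral>x. indicator (X -` a \<inter> space M) x * hm x \<partial>M)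
        = (\<integral>x. indicator (X -` a \<inter> space M) x * h x \<partial>M)"
      apply (subst Bochner_Integration.integral_diff[OF i1, symmetric])
      by (rule Bochner_Integration.integral_cong) (auto simp: hp_def hm_def max_def algebra_simps)
    then have eqi: "(\<integral>x. indicator (X -` a \<inter> space M) x * hp x \<partial>M) = (\<integral>x. indicator (X -` a \<inter> space M) x * hm x \<partial>M)"
      using orth[OF a'] by simp
    have "emeasure N1 a = (\<integral>\<^sup>+ x. ennreal (hp x) * indicator (X -` a \<inter> space M) x \<partial>M)"
      unfolding N1_def using a' S
      by (simp add: emeasure_distr emeasure_density)
    also have "\<dots> = (\<integral>\<^sup>+ x. ennreal (indicator (X -` a \<inter> space M) x * hp x) \<partial>M)"
      by (rule nn_integral_cong) (auto simp: indicator_def hp_def)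
    also have "\<dots> = ennreal (\<integral>x. indicator (X -` a \<inter> space M) x * hp x \<partial>M)"
      by (rule nn_integral_eq_integral[OF i1(1)]) (auto simp: hp_def)
    also have "\<dots> = ennreal (\<integral>x. indicator (X -` a \<inter> space M) x * hm x \<partial>M)" using eqi by simp
    also have "\<dots> = (\<integral>\<^sup>+ x. ennreal (indicator (X -` a \<inter> space M) x * hm x) \<partial>M)"
      by (rule nn_integral_eq_integral[OF i1(2), symmetric]) (auto simp: hm_def)
    also have "\<dots> = (\<integral>\<^sup>+ x. ennreal (hm x) * indicator (X -` a \<inter> space M) x \<partial>M)"
      by (rule nn_integral_cong) (auto simp: indicator_def hm_def)
    also have "\<dots> = emeasure N2 a"
      unfolding N2_def using a' S
      by (simp add: emeasure_distr emeasure_density)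
    finally show "emeasure N1 a = emeasure N2 a" .
  qed
  have e1: "integral\<^sup>L N1 (\<lambda>t. t) = (\<integral>x. X x * hp x \<partial>M)"
    unfolding N1_def
    apply (subst integral_distr) apply simp_all
    apply (subst integral_density) by (auto simp: hp_def mult.commute)
  have e2: "integral\<^sup>L N2 (\<lambda>t. t) = (\<integral>x. X x * hm x \<partial>M)"
    unfolding N2_def
    apply (subst integral_distr) apply simp_all
    apply (subst integral_density) by (auto simp: hm_def mult.commute)
  have "(\<integral>x. X x * h x \<partial>M) = (\<integral>x. X x * hp x \<partial>M) - (\<integral>x. X x * hm x \<partial>M)"
    apply (subst Bochner_Integration.integral_diff[OF iXhp, symmetric])
    by (rule Bochner_Integration.integral_cong) (auto simp: hp_def hm_def max_def algebra_simps)
  then show ?thesis using e1 e2 \<open>N1 = N2\<close> by simp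
qed
lemma (in finite_measure) int_ind[simp]:
  "A \<in> sets M \<Longrightarrow> integrable M (indicator A :: 'a \<Rightarrow> real)"
  by (rule integrable_const_bound[where B=1]) auto

lemma (in finite_measure) int_ind2[simp]:
  "A \<in> sets M \<Longrightarrow> B \<in> sets M \<Longrightarrow> integrable M (\<lambda>x. indicator A x * indicator B x :: real)"
  by (rule integrable_const_bound[where B=1]) (auto simp: indicator_def)

lemma ci_core:
  fixes X :: "'a \<Rightarrow> real"
  assumes P: "prob_space M" and sub: "subalgebra M F"
    and X[measurable]: "X \<in> borel_measurable M" and iX: "integrable M X"
    and E[measurable]: "E \<in> sets M"
    and hyp: "\<And>a. a \<in> sets borel \<Longrightarrow> AE x in M.
        real_cond_exp M F (indicator ((X -` a \<inter> space M) \<inter> E)) x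
        = real_cond_exp M F (indicator (X -` a \<inter> space M)) x * real_cond_exp M F (indicator E) x"
    and ZE: "\<And>h. h \<in> borel_measurable M \<Longrightarrow> (AE x in M. \<bar>h x\<bar> \<le> 1) \<Longrightarrow>
        (\<And>a. a \<in> sets borel \<Longrightarrow> (\<integral>x. indicator (X -` a \<inter> space M) x * h x \<partial>M) = 0) \<Longrightarrow>
        (\<integral>x. X x * h x \<partial>M) = 0"
  shows "AE x in M. real_cond_exp M F (\<lambda>x. X x * indicator E x) x
          = real_cond_exp M F X x * real_cond_exp M F (indicator E) x"
proof -
  interpret prob_space M by (rule P)
  interpret finite_measure_subalgebra M F by unfold_locales (rule sub)
  define c where "c = real_cond_exp M F (indicator E)"
  have cF[measurable]: "c \<in> borel_measurable F" unfolding c_def by simp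
  have cM[measurable]: "c \<in> borel_measurable M" unfolding c_def by simp
  have iE: "integrable M (indicator E :: 'a \<Rightarrow> real)" by simp
  have c0: "AE x in M. 0 \<le> c x" unfolding c_def
    by (rule real_cond_exp_ge_c[OF iE]) auto
  have c1: "AE x in M. c x \<le> 1" unfolding c_def
    by (rule real_cond_exp_le_c[OF iE]) (auto simp: indicator_def)
  have cb: "AE x in M. \<bar>c x\<bar> \<le> 1" using c0 c1 by eventually_elim auto
  have bnd: "integrable M (\<lambda>x. d x * c x * f x)" if "integrable M f" "f \<in> borel_measurable M"
      "d \<in> borel_measurable M" "\<And>x. \<bar>d x\<bar> \<le> 1" for d f
  proof (rule Bochner_Integration.integrable_bound[OF that(1)])
    show "(\<lambda>x. d x * c x * f x) \<in> borel_measurable M" using that by measurable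
    show "AE x in M. norm (d x * c x * f x) \<le> norm (f x)"
      using cb
    proof eventually_elim
      case (elim x)
      have "\<bar>d x * c x\<bar> \<le> 1" using that(4)[of x] elim by (simp add: abs_mult mult_le_one)
      then show ?case by (simp add: abs_mult mult_left_le_one_le mult.assoc[symmetric])
    qed
  qed
  have iRX: "integrable M (real_cond_exp M F X)" using real_cond_exp_int(1)[OF iX] .
  show ?thesis
    unfolding c_def[symmetric]
  proof (rule real_cond_exp_charact)
    show "integrable M (\<lambda>x. X x * indicator E x)"
      using integrable_real_mult_indicator[OF E iX] .
    show "integrable M (\<lambda>x. real_cond_exp M F X x * c x)"
      using bnd[OF iRX, of "\<lambda>_. 1"] by (simp add: mult.commute)
    show "(\<lambda>x. real_cond_exp M F X x * c x) \<in> borel_measurable F" by measurable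
    fix A assume AF: "A \<in> sets F"
    then have A[measurable]: "A \<in> sets M" using sub by (auto simp: subalgebra_def)
    have AF'[measurable]: "(\<lambda>x. indicator A x * c x) \<in> borel_measurable F" using AF by measurable
    have l: "(\<integral>x\<in>A. X x * indicator E x \<partial>M) = (\<integral>x. indicator A x * indicator E x * X x \<partial>M)"
      unfolding set_lebesgue_integral_def by (simp add: mult_ac)
    have "(\<integral>x\<in>A. real_cond_exp M F X x * c x \<partial>M) = (\<integral>x. (indicator A x * c x) * real_cond_exp M F X x \<partial>M)"
      unfolding set_lebesgue_integral_def by (simp add: mult_ac)
    also have "\<dots> = (\<integral>x. (indicator A x * c x) * X x \<partial>M)"
      by (rule real_cond_exp_intg(2)) (use bnd[OF iX X, of "indicator A"] in auto)
    finally have r: "(\<integral>x\<in>A. real_cond_exp M F X x * c x \<partial>M) = (\<integral>x. indicator A x * c x * X x \<partial>M)" .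
    define h where "h = (\<lambda>x. indicator A x * indicator E x - indicator A x * c x)"
    have hM[measurable]: "h \<in> borel_measurable M" unfolding h_def by measurable
    have hb: "AE x in M. \<bar>h x\<bar> \<le> 1" using c0 c1
      by eventually_elim (auto simp: h_def indicator_def)
    have orth: "(\<integral>x. indicator (X -` a \<inter> space M) x * h x \<partial>M) = 0" if a: "a \<in> sets borel" for a
    proof -
      define S where "S = X -` a \<inter> space M"
      have S[measurable]: "S \<in> sets M" unfolding S_def using a by measurable
      have iS: "integrable M (indicator S :: 'a \<Rightarrow> real)" by simp
      have iSE: "integrable M (indicator (S \<inter> E) :: 'a \<Rightarrow> real)" by simp
      have "(\<integral>x. indicator A x * indicator (S \<inter> E) x \<partial>M)
            = (\<integral>x. indicator A x * real_cond_exp M F (indicator (S \<inter> E)) x \<partial>M)"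
        by (rule real_cond_exp_intg(2)[symmetric]) (use AF iSE A in auto)
      also have "\<dots> = (\<integral>x. (indicator A x * c x) * real_cond_exp M F (indicator S) x \<partial>M)"
        apply (rule integral_cong_AE)
        subgoal using A by measurable
        subgoal using A by measurable
        using hyp[OF a] by eventually_elim (simp add: S_def c_def)
      also have "\<dots> = (\<integral>x. (indicator A x * c x) * indicator S x \<partial>M)"
        by (rule real_cond_exp_intg(2)) (use bnd[OF iS, of "indicator A"] in auto)
      finally have eq: "(\<integral>x. indicator A x * indicator (S \<inter> E) x \<partial>M) = (\<integral>x. (indicator A x * c x) * indicator S x \<partial>M)" .
      have i1: "integrable M (\<lambda>x. indicator A x * indicator (S \<inter> E) x :: real)" by simp
      have i2: "integrable M (\<lambda>x. (indicator A x * c x) * indicator S x)"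
        using bnd[OF iS, of "indicator A"] by auto
      have "(\<integral>x. indicator S x * h x \<partial>M)
         = (\<integral>x. indicator A x * indicator (S \<inter> E) x - (indicator A x * c x) * indicator S x \<partial>M)"
        by (rule Bochner_Integration.integral_cong) (auto simp: h_def indicator_def)
      also have "\<dots> = 0" using eq by (simp add: Bochner_Integration.integral_diff[OF i1 i2])
      finally show ?thesis by (simp add: S_def)
    qed
    have z: "(\<integral>x. X x * h x \<partial>M) = 0" by (rule ZE[OF hM hb orth])
    have i1: "integrable M (\<lambda>x. indicator A x * indicator E x * X x)"
      using integrable_real_mult_indicator[OF A integrable_real_mult_indicator[OF E iX]]
      by (simp add: mult_ac)
    have i2: "integrable M (\<lambda>x. indicator A x * c x * X x)"
      using bnd[OF iX X, of "indicator A"] by auto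
    have "(\<integral>x. X x * h x \<partial>M) = (\<integral>x. indicator A x * indicator E x * X x - indicator A x * c x * X x \<partial>M)"
      by (rule Bochner_Integration.integral_cong) (auto simp: h_def algebra_simps)
    also have "\<dots> = (\<integral>x. indicator A x * indicator E x * X x \<partial>M) - (\<integral>x. indicator A x * c x * X x \<partial>M)"
      by (rule Bochner_Integration.integral_diff[OF i1 i2])
    finally show "(\<integral>x\<in>A. X x * indicator E x \<partial>M) = (\<integral>x\<in>A. real_cond_exp M F X x * c x \<partial>M)"
      using l r z by simp
  qed
qed


lemma subalg_gen:
  assumes "C \<in> measurable M MC"
  shows "subalgebra M (gen_sigma M C MC)"
  unfolding subalgebra_def gen_sigma_def
  using sets_image_in_sets[OF refl assms] by simp

lemma ci1:
  fixes X B :: "'a \<Rightarrow> real"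
  assumes P: "prob_space M" and C: "C \<in> measurable M MC"
    and X[measurable]: "X \<in> borel_measurable M" and iX: "integrable M X"
    and B[measurable]: "B \<in> borel_measurable M" and b[measurable]: "b \<in> sets borel"
    and ci: "cond_indep M X borel B borel C MC"
    and E: "E = {y\<in>space M. B y \<in> b}"
  shows "AE x in M. cexp M (\<lambda>x. X x * indicator E x) C MC x = cexp M X C MC x * cexp M (indicator E) C MC x"
  unfolding cexp_def
proof (rule ci_core[OF P subalg_gen[OF C] X iX])
  show "E \<in> sets M" unfolding E by measurable
  show "(\<integral>x. X x * h x \<partial>M) = 0" if "h \<in> borel_measurable M" "AE x in M. \<bar>h x\<bar> \<le> 1"
    "\<And>a. a \<in> sets borel \<Longrightarrow> (\<integral>x. indicator (X -` a \<inter> space M) x * h x \<partial>M) = 0" for h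
    using zero_extend[OF prob_space.finite_measure[OF P] X iX that] .
  fix a :: "real set" assume a: "a \<in> sets borel"
  have e1: "{y\<in>space M. X y \<in> a} \<inter> E = {y\<in>space M. X y \<in> a \<and> B y \<in> b}" using E by auto
  have e2: "X -` a \<inter> space M = {y\<in>space M. X y \<in> a}" by auto
  show "AE x in M. real_cond_exp M (gen_sigma M C MC) (indicator (X -` a \<inter> space M \<inter> E)) x =
      real_cond_exp M (gen_sigma M C MC) (indicator (X -` a \<inter> space M)) x *
      real_cond_exp M (gen_sigma M C MC) (indicator E) x"
  proof -
    have h: "AE x in M. real_cond_exp M (gen_sigma M C MC) (indicator {y\<in>space M. X y \<in> a \<and> B y \<in> b}) x
       = real_cond_exp M (gen_sigma M C MC) (indicator {y\<in>space M. X y \<in> a}) x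
         * real_cond_exp M (gen_sigma M C MC) (indicator {y\<in>space M. B y \<in> b}) x"
      using ci a b unfolding cond_indep_def cexp_def by blast
    show ?thesis using h by (simp only: e1 e2 E[symmetric])
  qed
qed

lemma ci2:
  fixes X B :: "'a \<Rightarrow> real"
  assumes P: "prob_space M" and C: "C \<in> measurable M MC"
    and X[measurable]: "X \<in> borel_measurable M" and iX: "integrable M X"
    and B[measurable]: "B \<in> borel_measurable M" and b[measurable]: "b \<in> sets borel"
    and ci: "cond_indep M B borel X borel C MC"
    and E: "E = {y\<in>space M. B y \<in> b}"
  shows "AE x in M. cexp M (\<lambda>x. X x * indicator E x) C MC x = cexp M X C MC x * cexp M (indicator E) C MC x"
  unfolding cexp_def
proof (rule ci_core[OF P subalg_gen[OF C] X iX])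
  show "E \<in> sets M" unfolding E by measurable
  show "(\<integral>x. X x * h x \<partial>M) = 0" if "h \<in> borel_measurable M" "AE x in M. \<bar>h x\<bar> \<le> 1"
    "\<And>a. a \<in> sets borel \<Longrightarrow> (\<integral>x. indicator (X -` a \<inter> space M) x * h x \<partial>M) = 0" for h
    using zero_extend[OF prob_space.finite_measure[OF P] X iX that] .
  fix a :: "real set" assume a: "a \<in> sets borel"
  have e1: "{y\<in>space M. X y \<in> a} \<inter> E = {y\<in>space M. B y \<in> b \<and> X y \<in> a}" using E by auto
  have e2: "X -` a \<inter> space M = {y\<in>space M. X y \<in> a}" by auto
  show "AE x in M. real_cond_exp M (gen_sigma M C MC) (indicator (X -` a \<inter> space M \<inter> E)) x =
      real_cond_exp M (gen_sigma M C MC) (indicator (X -` a \<inter> space M)) x *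
      real_cond_exp M (gen_sigma M C MC) (indicator E) x"
  proof -
    have h: "AE x in M. real_cond_exp M (gen_sigma M C MC) (indicator {y\<in>space M. B y \<in> b \<and> X y \<in> a}) x
       = real_cond_exp M (gen_sigma M C MC) (indicator {y\<in>space M. B y \<in> b}) x
         * real_cond_exp M (gen_sigma M C MC) (indicator {y\<in>space M. X y \<in> a}) x"
      using ci a b unfolding cond_indep_def cexp_def by blast
    show ?thesis using h by (simp only: e1 e2 E[symmetric] mult.commute)
  qed
qed


lemma FV_facts:
  fixes Y21 :: "'a \<Rightarrow> real" and U :: "'a \<Rightarrow> 'u"
  assumes U: "U \<in> measurable M N" and Y: "Y21 \<in> borel_measurable M"
  shows "subalgebra (gen_sigma M (\<lambda>x. (Y21 x, U x)) (borel \<Otimes>\<^sub>M N)) (gen_sigma M U N)"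
    and "Y21 \<in> borel_measurable (gen_sigma M (\<lambda>x. (Y21 x, U x)) (borel \<Otimes>\<^sub>M N))"
    and "(\<lambda>x. (Y21 x, U x)) \<in> measurable M (borel \<Otimes>\<^sub>M N)"
proof -
  let ?V = "\<lambda>x. (Y21 x, U x)"
  let ?FV = "gen_sigma M ?V (borel \<Otimes>\<^sub>M N)"
  show V: "?V \<in> measurable M (borel \<Otimes>\<^sub>M N)" using U Y by measurable
  have VF: "?V \<in> measurable ?FV (borel \<Otimes>\<^sub>M N)"
    unfolding gen_sigma_def by (rule measurable_vimage_algebra1) (use measurable_space[OF V] in auto)
  have "(\<lambda>x. snd (?V x)) \<in> measurable ?FV N" by (rule measurable_compose[OF VF measurable_snd])
  then have UF: "U \<in> measurable ?FV N" by simp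
  have "(\<lambda>x. fst (?V x)) \<in> measurable ?FV borel" by (rule measurable_compose[OF VF measurable_fst])
  then show "Y21 \<in> borel_measurable ?FV" by simp
  show "subalgebra ?FV (gen_sigma M U N)"
    unfolding subalgebra_def
    using sets_image_in_sets[of ?FV "space M" U N] UF by (simp add: gen_sigma_def)
qed


lemma partA:
  fixes M :: "'a measure" and N :: "'u measure" and U :: "'a \<Rightarrow> 'u"
    and W Y21 Y12 Yp :: "'a \<Rightarrow> real" and yv \<gamma>0 \<gamma>1 \<gamma>2 :: real
  assumes P: "prob_space M"
    and meas_U[measurable]: "U \<in> measurable M N"
    and meas_W[measurable]: "W \<in> borel_measurable M"
    and meas_Y21[measurable]: "Y21 \<in> borel_measurable M"
    and meas_Y12[measurable]: "Y12 \<in> borel_measurable M"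
    and meas_Yp[measurable]: "Yp \<in> borel_measurable M"
    and int_W: "integrable M W" and int_Y12: "integrable M Y12" and int_Yp: "integrable M Yp"
    and cons: "AE x in M. Y21 x = yv \<longrightarrow> Y12 x = Yp x"
    and pos: "AE x in M. 0 < cexp M (indicator {y\<in>space M. Y21 y = yv}) U N x"
    and L: "cond_indep M Yp borel Y21 borel U N"
    and NC1: "cond_indep M W borel Y21 borel U N"
    and B: "AE x in M. Y21 x = yv \<longrightarrow>
              cexp M Y12 (\<lambda>x. (Y21 x, U x)) (borel \<Otimes>\<^sub>M N) x
            = cexp M (\<lambda>x. \<gamma>0 + \<gamma>1 * W x + \<gamma>2 * yv) (\<lambda>x. (Y21 x, U x)) (borel \<Otimes>\<^sub>M N) x"
  shows "(\<integral>x. Yp x \<partial>M) = \<gamma>0 + \<gamma>1 * (\<integral>x. W x \<partial>M) + \<gamma>2 * yv"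
proof -
  interpret prob_space M by (rule P)
  define FU where "FU = gen_sigma M U N"
  define FV where "FV = gen_sigma M (\<lambda>x. (Y21 x, U x)) (borel \<Otimes>\<^sub>M N)"
  have subU: "subalgebra M FU" unfolding FU_def by (rule subalg_gen[OF meas_U])
  have subV: "subalgebra M FV" unfolding FV_def by (rule subalg_gen) (rule FV_facts(3)[OF meas_U meas_Y21])
  have subVU: "subalgebra FV FU" unfolding FV_def FU_def by (rule FV_facts(1)[OF meas_U meas_Y21])
  have Y21V[measurable]: "Y21 \<in> borel_measurable FV" unfolding FV_def by (rule FV_facts(2)[OF meas_U meas_Y21])
  interpret FU: finite_measure_subalgebra M FU by unfold_locales (rule subU)
  interpret FV: finite_measure_subalgebra M FV by unfold_locales (rule subV)
  have sV: "space FV = space M" using subV by (simp add: subalgebra_def)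
  define h where "h = (\<lambda>x. \<gamma>0 + \<gamma>1 * W x + \<gamma>2 * yv)"
  have h[measurable]: "h \<in> borel_measurable M" unfolding h_def by measurable
  have ih: "integrable M h" unfolding h_def using int_W by auto
  define G where "G = {y\<in>space M. Y21 y = yv}"
  have GM[measurable]: "G \<in> sets M" unfolding G_def by measurable
  have GV: "G \<in> sets FV" unfolding G_def using sV[symmetric] by simp measurable
  have GV'[measurable]: "(indicator G :: 'a \<Rightarrow> real) \<in> borel_measurable FV" using GV by simp
  have G': "G = {y\<in>space M. Y21 y \<in> {yv}}" unfolding G_def by auto
  define p where "p = real_cond_exp M FU (indicator G)"
  have cU: "cexp M f U N = real_cond_exp M FU f" for f unfolding cexp_def FU_def ..
  have cV: "cexp M f (\<lambda>x. (Y21 x, U x)) (borel \<Otimes>\<^sub>M N) = real_cond_exp M FV f" for f unfolding cexp_def FV_def ..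
  have iYG: "integrable M (\<lambda>x. Y12 x * indicator G x)" by (rule integrable_real_mult_indicator[OF GM int_Y12])
  have ihG: "integrable M (\<lambda>x. h x * indicator G x)" by (rule integrable_real_mult_indicator[OF GM ih])
  have iWG: "integrable M (\<lambda>x. W x * indicator G x)" by (rule integrable_real_mult_indicator[OF GM int_W])
  have iYpG: "integrable M (\<lambda>x. Yp x * indicator G x)" by (rule integrable_real_mult_indicator[OF GM int_Yp])
  have s1: "AE x in M. real_cond_exp M FU (\<lambda>x. Yp x * indicator G x) x = real_cond_exp M FU Yp x * p x"
    using ci1[OF P meas_U meas_Yp int_Yp meas_Y21 _ L G'] by (simp add: cU p_def)
  have s2: "AE x in M. real_cond_exp M FU (\<lambda>x. Yp x * indicator G x) x = real_cond_exp M FU (\<lambda>x. Y12 x * indicator G x) x"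
    by (rule FU.real_cond_exp_cong) (use cons in \<open>auto simp: G_def indicator_def elim!: eventually_mono\<close>)
  have m1: "AE x in M. real_cond_exp M FV (\<lambda>x. indicator G x * Y12 x) x = indicator G x * real_cond_exp M FV Y12 x"
    by (rule FV.real_cond_exp_mult) (use iYG in \<open>auto simp: mult.commute\<close>)
  have m2: "AE x in M. real_cond_exp M FV (\<lambda>x. indicator G x * h x) x = indicator G x * real_cond_exp M FV h x"
    by (rule FV.real_cond_exp_mult) (use ihG in \<open>auto simp: mult.commute\<close>)
  have s3: "AE x in M. real_cond_exp M FV (\<lambda>x. Y12 x * indicator G x) x = real_cond_exp M FV (\<lambda>x. h x * indicator G x) x"
    using m1 m2 B
  proof eventually_elim
    case (elim x)
    have e1: "(\<lambda>x. Y12 x * indicator G x) = (\<lambda>x. indicator G x * Y12 x)" by (simp add: mult.commute)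
    have e2: "(\<lambda>x. h x * indicator G x) = (\<lambda>x. indicator G x * h x)" by (simp add: mult.commute)
    show ?case using elim unfolding e1 e2 cV h_def[symmetric]
      by (cases "x \<in> G") (auto simp: G_def)
  qed
  have s4: "AE x in M. real_cond_exp M FU (\<lambda>x. Y12 x * indicator G x) x = real_cond_exp M FU (\<lambda>x. h x * indicator G x) x"
  proof -
    have a1: "AE x in M. real_cond_exp M FU (real_cond_exp M FV (\<lambda>x. Y12 x * indicator G x)) x = real_cond_exp M FU (\<lambda>x. Y12 x * indicator G x) x"
      by (rule FU.real_cond_exp_nested_subalg[OF subV subVU iYG])
    have a2: "AE x in M. real_cond_exp M FU (real_cond_exp M FV (\<lambda>x. h x * indicator G x)) x = real_cond_exp M FU (\<lambda>x. h x * indicator G x) x"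
      by (rule FU.real_cond_exp_nested_subalg[OF subV subVU ihG])
    have a3: "AE x in M. real_cond_exp M FU (real_cond_exp M FV (\<lambda>x. Y12 x * indicator G x)) x = real_cond_exp M FU (real_cond_exp M FV (\<lambda>x. h x * indicator G x)) x"
      by (rule FU.real_cond_exp_cong[OF s3]) simp_all
    show ?thesis using a1 a2 a3 by eventually_elim simp
  qed
  have s5: "AE x in M. real_cond_exp M FU (\<lambda>x. h x * indicator G x) x = (\<gamma>0 + \<gamma>2 * yv) * p x + \<gamma>1 * real_cond_exp M FU (\<lambda>x. W x * indicator G x) x"
  proof -
    have e: "(\<lambda>x. h x * indicator G x) = (\<lambda>x. (\<gamma>0 + \<gamma>2 * yv) * indicator G x + \<gamma>1 * (W x * indicator G x))"
      by (auto simp: h_def algebra_simps)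
    have iG: "integrable M (\<lambda>x. (\<gamma>0 + \<gamma>2 * yv) * indicator G x :: real)" using GM by simp
    have iW2: "integrable M (\<lambda>x. \<gamma>1 * (W x * indicator G x))" using iWG by simp
    have b1: "AE x in M. real_cond_exp M FU (\<lambda>x. (\<gamma>0 + \<gamma>2 * yv) * indicator G x + \<gamma>1 * (W x * indicator G x)) x
       = real_cond_exp M FU (\<lambda>x. (\<gamma>0 + \<gamma>2 * yv) * indicator G x) x + real_cond_exp M FU (\<lambda>x. \<gamma>1 * (W x * indicator G x)) x"
      by (rule FU.real_cond_exp_add[OF iG iW2])
    have b2: "AE x in M. real_cond_exp M FU (\<lambda>x. (\<gamma>0 + \<gamma>2 * yv) * indicator G x) x = (\<gamma>0 + \<gamma>2 * yv) * p x"
      unfolding p_def by (rule FU.real_cond_exp_cmult) (use GM in simp)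
    have b3: "AE x in M. real_cond_exp M FU (\<lambda>x. \<gamma>1 * (W x * indicator G x)) x = \<gamma>1 * real_cond_exp M FU (\<lambda>x. W x * indicator G x) x"
      by (rule FU.real_cond_exp_cmult[OF iWG])
    show ?thesis unfolding e using b1 b2 b3 by eventually_elim simp
  qed
  have s6: "AE x in M. real_cond_exp M FU (\<lambda>x. W x * indicator G x) x = real_cond_exp M FU W x * p x"
    using ci1[OF P meas_U meas_W int_W meas_Y21 _ NC1 G'] by (simp add: cU p_def)
  have pos': "AE x in M. 0 < p x" using pos by (simp add: cU p_def G_def)
  have key: "AE x in M. real_cond_exp M FU Yp x = \<gamma>0 + \<gamma>1 * real_cond_exp M FU W x + \<gamma>2 * yv"
    using s1 s2 s4 s5 s6 pos'
  proof eventually_elim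
    case (elim x)
    then have "real_cond_exp M FU Yp x * p x = (\<gamma>0 + \<gamma>1 * real_cond_exp M FU W x + \<gamma>2 * yv) * p x"
      by (simp add: algebra_simps)
    then show ?case using elim(6) by simp
  qed
  have iRW: "integrable M (real_cond_exp M FU W)" by (rule FU.real_cond_exp_int(1)[OF int_W])
  have "(\<integral>x. Yp x \<partial>M) = (\<integral>x. real_cond_exp M FU Yp x \<partial>M)"
    by (rule FU.real_cond_exp_int(2)[OF int_Yp, symmetric])
  also have "\<dots> = (\<integral>x. \<gamma>0 + \<gamma>2 * yv + \<gamma>1 * real_cond_exp M FU W x \<partial>M)"
    by (rule integral_cong_AE) (use key in \<open>auto elim!: eventually_mono\<close>)
  also have "\<dots> = \<gamma>0 + \<gamma>2 * yv + \<gamma>1 * (\<integral>x. real_cond_exp M FU W x \<partial>M)"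
    using iRW by (simp add: prob_space)
  also have "(\<integral>x. real_cond_exp M FU W x \<partial>M) = (\<integral>x. W x \<partial>M)"
    by (rule FU.real_cond_exp_int(2)[OF int_W])
  finally show ?thesis by simp
qed


lemma partB:
  fixes M :: "'a measure" and N :: "'u measure" and U :: "'a \<Rightarrow> 'u"
    and W Y21 Y12 Z :: "'a \<Rightarrow> real" and av bv \<gamma>0 \<gamma>1 \<gamma>2 :: real
  assumes P: "prob_space M"
    and meas_U[measurable]: "U \<in> measurable M N"
    and meas_W[measurable]: "W \<in> borel_measurable M"
    and meas_Z[measurable]: "Z \<in> borel_measurable M"
    and meas_Y21[measurable]: "Y21 \<in> borel_measurable M"
    and meas_Y12[measurable]: "Y12 \<in> borel_measurable M"
    and int_W: "integrable M W" and int_Y12: "integrable M Y12"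
    and NC2: "cond_indep M Z borel Y12 borel (\<lambda>x. (Y21 x, U x)) (borel \<Otimes>\<^sub>M N)"
    and NC3: "cond_indep M Z borel W borel (\<lambda>x. (Y21 x, U x)) (borel \<Otimes>\<^sub>M N)"
    and B: "AE x in M. Y21 x = av \<longrightarrow>
              cexp M Y12 (\<lambda>x. (Y21 x, U x)) (borel \<Otimes>\<^sub>M N) x
            = cexp M (\<lambda>x. \<gamma>0 + \<gamma>1 * W x + \<gamma>2 * av) (\<lambda>x. (Y21 x, U x)) (borel \<Otimes>\<^sub>M N) x"
  shows "(\<integral>x. indicator {x\<in>space M. Y21 x = av \<and> Z x = bv} x * Y12 x \<partial>M)
     = \<gamma>0 * measure M {x\<in>space M. Y21 x = av \<and> Z x = bv}
       + \<gamma>1 * (\<integral>x. indicator {x\<in>space M. Y21 x = av \<and> Z x = bv} x * W x \<partial>M)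
       + \<gamma>2 * av * measure M {x\<in>space M. Y21 x = av \<and> Z x = bv}"
proof -
  interpret prob_space M by (rule P)
  define FV where "FV = gen_sigma M (\<lambda>x. (Y21 x, U x)) (borel \<Otimes>\<^sub>M N)"
  have Vm: "(\<lambda>x. (Y21 x, U x)) \<in> measurable M (borel \<Otimes>\<^sub>M N)" by (rule FV_facts(3)[OF meas_U meas_Y21])
  have subV: "subalgebra M FV" unfolding FV_def by (rule subalg_gen) (rule Vm)
  have Y21V[measurable]: "Y21 \<in> borel_measurable FV" unfolding FV_def by (rule FV_facts(2)[OF meas_U meas_Y21])
  interpret FV: finite_measure_subalgebra M FV by unfold_locales (rule subV)
  have sV: "space FV = space M" using subV by (simp add: subalgebra_def)
  define h where "h = (\<lambda>x. \<gamma>0 + \<gamma>1 * W x + \<gamma>2 * av)"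
  have h[measurable]: "h \<in> borel_measurable M" unfolding h_def by measurable
  have ih: "integrable M h" unfolding h_def using int_W by auto
  define G where "G = {y\<in>space M. Y21 y = av}"
  have GM[measurable]: "G \<in> sets M" unfolding G_def by measurable
  have GV: "G \<in> sets FV" unfolding G_def using sV[symmetric] by simp measurable
  have GV'[measurable]: "(indicator G :: 'a \<Rightarrow> real) \<in> borel_measurable FV" using GV by simp
  define E where "E = {y\<in>space M. Z y = bv}"
  have EM[measurable]: "E \<in> sets M" unfolding E_def by measurable
  have E': "E = {y\<in>space M. Z y \<in> {bv}}" unfolding E_def by auto
  define T where "T = {x\<in>space M. Y21 x = av \<and> Z x = bv}"
  have TM[measurable]: "T \<in> sets M" unfolding T_def by measurable
  have indT: "indicator T x = (indicator G x * indicator E x :: real)" for x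
    by (auto simp: T_def G_def E_def indicator_def)
  define q where "q = real_cond_exp M FV (indicator E)"
  define rW where "rW = real_cond_exp M FV W"
  have cV: "cexp M f (\<lambda>x. (Y21 x, U x)) (borel \<Otimes>\<^sub>M N) = real_cond_exp M FV f" for f unfolding cexp_def FV_def ..
  have iYE: "integrable M (\<lambda>x. Y12 x * indicator E x)" by (rule integrable_real_mult_indicator[OF EM int_Y12])
  have ihE: "integrable M (\<lambda>x. h x * indicator E x)" by (rule integrable_real_mult_indicator[OF EM ih])
  have iWE: "integrable M (\<lambda>x. W x * indicator E x)" by (rule integrable_real_mult_indicator[OF EM int_W])
  have c1: "AE x in M. real_cond_exp M FV (\<lambda>x. Y12 x * indicator E x) x = real_cond_exp M FV Y12 x * q x"
    using ci2[OF P Vm meas_Y12 int_Y12 meas_Z _ NC2 E'] by (simp add: cV q_def)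
  have c2: "AE x in M. real_cond_exp M FV (\<lambda>x. W x * indicator E x) x = rW x * q x"
    using ci2[OF P Vm meas_W int_W meas_Z _ NC3 E'] by (simp add: cV q_def rW_def)
  have c3: "AE x in M. real_cond_exp M FV h x = (\<gamma>0 + \<gamma>2 * av) + \<gamma>1 * rW x"
  proof -
    have e: "h = (\<lambda>x. (\<gamma>0 + \<gamma>2 * av) + \<gamma>1 * W x)" by (auto simp: h_def)
    have i1: "integrable M (\<lambda>x. (\<gamma>0 + \<gamma>2 * av))" by simp
    have i2: "integrable M (\<lambda>x. \<gamma>1 * W x)" using int_W by simp
    have b1: "AE x in M. real_cond_exp M FV (\<lambda>x. (\<gamma>0 + \<gamma>2 * av) + \<gamma>1 * W x) x
       = real_cond_exp M FV (\<lambda>x. (\<gamma>0 + \<gamma>2 * av)) x + real_cond_exp M FV (\<lambda>x. \<gamma>1 * W x) x"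
      by (rule FV.real_cond_exp_add[OF i1 i2])
    have b2: "AE x in M. real_cond_exp M FV (\<lambda>x. (\<gamma>0 + \<gamma>2 * av)) x = (\<gamma>0 + \<gamma>2 * av)"
      by (rule FV.real_cond_exp_F_meas) simp_all
    have b3: "AE x in M. real_cond_exp M FV (\<lambda>x. \<gamma>1 * W x) x = \<gamma>1 * rW x"
      unfolding rW_def by (rule FV.real_cond_exp_cmult[OF int_W])
    show ?thesis unfolding e using b1 b2 b3 by eventually_elim simp
  qed
  have c4: "AE x in M. real_cond_exp M FV (\<lambda>x. h x * indicator E x) x = (\<gamma>0 + \<gamma>2 * av) * q x + \<gamma>1 * real_cond_exp M FV (\<lambda>x. W x * indicator E x) x"
  proof -
    have e: "(\<lambda>x. h x * indicator E x) = (\<lambda>x. (\<gamma>0 + \<gamma>2 * av) * indicator E x + \<gamma>1 * (W x * indicator E x))"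
      by (auto simp: h_def algebra_simps)
    have iG: "integrable M (\<lambda>x. (\<gamma>0 + \<gamma>2 * av) * indicator E x :: real)" using EM by simp
    have iW2: "integrable M (\<lambda>x. \<gamma>1 * (W x * indicator E x))" using iWE by simp
    have b1: "AE x in M. real_cond_exp M FV (\<lambda>x. (\<gamma>0 + \<gamma>2 * av) * indicator E x + \<gamma>1 * (W x * indicator E x)) x
       = real_cond_exp M FV (\<lambda>x. (\<gamma>0 + \<gamma>2 * av) * indicator E x) x + real_cond_exp M FV (\<lambda>x. \<gamma>1 * (W x * indicator E x)) x"
      by (rule FV.real_cond_exp_add[OF iG iW2])
    have b2: "AE x in M. real_cond_exp M FV (\<lambda>x. (\<gamma>0 + \<gamma>2 * av) * indicator E x) x = (\<gamma>0 + \<gamma>2 * av) * q x"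
      unfolding q_def by (rule FV.real_cond_exp_cmult) (use EM in simp)
    have b3: "AE x in M. real_cond_exp M FV (\<lambda>x. \<gamma>1 * (W x * indicator E x)) x = \<gamma>1 * real_cond_exp M FV (\<lambda>x. W x * indicator E x) x"
      by (rule FV.real_cond_exp_cmult[OF iWE])
    show ?thesis unfolding e using b1 b2 b3 by eventually_elim simp
  qed
  have key: "AE x in M. indicator G x * real_cond_exp M FV (\<lambda>x. Y12 x * indicator E x) x
              = indicator G x * real_cond_exp M FV (\<lambda>x. h x * indicator E x) x"
    using c1 c2 c3 c4 B
  proof eventually_elim
    case (elim x)
    show ?case
    proof (cases "x \<in> G")
      case True
      then have "Y21 x = av" by (simp add: G_def)
      then have "real_cond_exp M FV Y12 x = real_cond_exp M FV h x" using elim(5) by (simp add: cV h_def)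
      then show ?thesis using elim(1-4) True by (simp add: algebra_simps)
    qed simp
  qed
  have iGYE: "integrable M (\<lambda>x. indicator G x * (Y12 x * indicator E x))"
    using integrable_real_mult_indicator[OF GM iYE] by (simp add: mult.commute)
  have iGhE: "integrable M (\<lambda>x. indicator G x * (h x * indicator E x))"
    using integrable_real_mult_indicator[OF GM ihE] by (simp add: mult.commute)
  have "(\<integral>x. indicator T x * Y12 x \<partial>M) = (\<integral>x. indicator G x * (Y12 x * indicator E x) \<partial>M)"
    by (rule Bochner_Integration.integral_cong) (auto simp: indT)
  also have "\<dots> = (\<integral>x. indicator G x * real_cond_exp M FV (\<lambda>x. Y12 x * indicator E x) x \<partial>M)"
    by (rule FV.real_cond_exp_intg(2)[symmetric]) (use iGYE in auto)
  also have "\<dots> = (\<integral>x. indicator G x * real_cond_exp M FV (\<lambda>x. h x * indicator E x) x \<partial>M)"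
    by (rule integral_cong_AE) (use key in auto)
  also have "\<dots> = (\<integral>x. indicator G x * (h x * indicator E x) \<partial>M)"
    by (rule FV.real_cond_exp_intg(2)) (use iGhE in auto)
  also have "\<dots> = (\<integral>x. (\<gamma>0 + \<gamma>2 * av) * indicator T x + \<gamma>1 * (indicator T x * W x) \<partial>M)"
    by (rule Bochner_Integration.integral_cong) (auto simp: indT h_def algebra_simps)
  also have "\<dots> = (\<gamma>0 + \<gamma>2 * av) * measure M T + \<gamma>1 * (\<integral>x. indicator T x * W x \<partial>M)"
  proof -
    have i1: "integrable M (\<lambda>x. (\<gamma>0 + \<gamma>2 * av) * indicator T x :: real)" using TM by simp
    have i2: "integrable M (\<lambda>x. \<gamma>1 * (indicator T x * W x))"
      using integrable_real_mult_indicator[OF TM int_W] by (simp add: mult.commute)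
    show ?thesis using TM by (simp add: Bochner_Integration.integral_add[OF i1 i2])
  qed
  finally show ?thesis unfolding T_def by (simp add: algebra_simps)
qed

theorem mainTheorem2:
  fixes M :: "'a measure" and N :: "'u measure"
    and U :: "'a \<Rightarrow> 'u"
    and W Z Y21 Y12 :: "'a \<Rightarrow> real"
    and Y12p :: "real \<Rightarrow> 'a \<Rightarrow> real"
    and \<gamma>0 \<gamma>1 \<gamma>2 :: real
  assumes prob: "prob_space M"
    and meas_U: "U \<in> measurable M N"
    and meas_W: "W \<in> borel_measurable M"
    and meas_Z: "Z \<in> borel_measurable M"
    and meas_Y21: "Y21 \<in> borel_measurable M"
    and meas_Y12: "Y12 \<in> borel_measurable M"
    and meas_Y12p: "\<forall>y\<in>{0,1}. Y12p y \<in> borel_measurable M"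
    and int_W: "integrable M W"
    and int_Y12: "integrable M Y12"
    and int_Y12p: "\<forall>y\<in>{0,1}. integrable M (Y12p y)"
    and bin_Y21: "\<forall>x\<in>space M. Y21 x \<in> {0,1}"
    and bin_Z: "\<forall>x\<in>space M. Z x \<in> {0,1}"
    and consistency: "AE x in M. Y12 x = Y12p (Y21 x) x"
    and positivity_U: "AE x in M. 0 < cexp M (indicator {y\<in>space M. Y21 y = 1}) U N x
                                \<and> cexp M (indicator {y\<in>space M. Y21 y = 1}) U N x < 1"
    and positivity_YZ: "\<forall>a\<in>{0,1}. \<forall>b\<in>{0,1}.
                          measure M {x\<in>space M. Y21 x = a \<and> Z x = b} > 0"
    and L: "\<forall>y\<in>{0,1}. cond_indep M (Y12p y) borel Y21 borel U N"
    and NC1: "cond_indep M W borel Y21 borel U N"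
    and NC2: "cond_indep M Z borel Y12 borel (\<lambda>x. (Y21 x, U x)) (borel \<Otimes>\<^sub>M N)"
    and NC3: "cond_indep M Z borel W borel (\<lambda>x. (Y21 x, U x)) (borel \<Otimes>\<^sub>M N)"
    and B: "\<forall>y\<in>{0,1}. AE x in M. Y21 x = y \<longrightarrow>
              cexp M Y12 (\<lambda>x. (Y21 x, U x)) (borel \<Otimes>\<^sub>M N) x
            = cexp M (\<lambda>x. \<gamma>0 + \<gamma>1 * W x + \<gamma>2 * y) (\<lambda>x. (Y21 x, U x)) (borel \<Otimes>\<^sub>M N) x"
    and nonzero: "expected_OD M W Z Y21 \<noteq> 0"
  shows "ACPE M Y12p 1 0
         = expected_OD M Y12 Y21 Z
           - expected_OD M W Y21 Z * expected_OD M Y12 Z Y21 / expected_OD M W Z Y21"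
proof -
  interpret prob_space M by (rule prob)
  have Yp1[measurable]: "Y12p 1 \<in> borel_measurable M" and Yp0[measurable]: "Y12p 0 \<in> borel_measurable M"
    using meas_Y12p by auto
  have iYp1: "integrable M (Y12p 1)" and iYp0: "integrable M (Y12p 0)" using int_Y12p by auto
  have cons: "AE x in M. Y21 x = yv \<longrightarrow> Y12 x = Y12p yv x" for yv
    using consistency by eventually_elim auto
  have pos0: "AE x in M. 0 < cexp M (indicator {y\<in>space M. Y21 y = 0}) U N x"
  proof -
    define FU where "FU = gen_sigma M U N"
    have subU: "subalgebra M FU" unfolding FU_def by (rule subalg_gen[OF meas_U])
    interpret FU: finite_measure_subalgebra M FU by unfold_locales (rule subU)
    define G1 where "G1 = {y\<in>space M. Y21 y = 1}"
    have G1M[measurable]: "G1 \<in> sets M" unfolding G1_def using meas_Y21 by measurable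
    have i1: "integrable M (\<lambda>x. 1::real)" by simp
    have i2: "integrable M (indicator G1 :: 'a \<Rightarrow> real)" using G1M by simp
    have a1: "AE x in M. real_cond_exp M FU (indicator {y\<in>space M. Y21 y = 0}) x = real_cond_exp M FU (\<lambda>x. 1 - indicator G1 x) x"
      apply (rule FU.real_cond_exp_cong)
      using bin_Y21 meas_Y21 by (auto simp: G1_def indicator_def intro!: AE_I2)
    have a2: "AE x in M. real_cond_exp M FU (\<lambda>x. 1 - indicator G1 x) x = real_cond_exp M FU (\<lambda>x. 1) x - real_cond_exp M FU (indicator G1) x"
      by (rule FU.real_cond_exp_diff[OF i1 i2])
    have a3: "AE x in M. real_cond_exp M FU (\<lambda>x. 1) x = 1"
      by (rule FU.real_cond_exp_F_meas) simp_all
    show ?thesis using a1 a2 a3 positivity_U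
      by eventually_elim (simp add: cexp_def FU_def G1_def)
  qed
  have A1: "(\<integral>x. Y12p 1 x \<partial>M) = \<gamma>0 + \<gamma>1 * (\<integral>x. W x \<partial>M) + \<gamma>2 * 1"
    by (rule partA[OF prob meas_U meas_W meas_Y21 meas_Y12 Yp1 int_W int_Y12 iYp1 cons])
       (use positivity_U L NC1 B in \<open>auto elim!: eventually_mono\<close>)
  have A0: "(\<integral>x. Y12p 0 x \<partial>M) = \<gamma>0 + \<gamma>1 * (\<integral>x. W x \<partial>M) + \<gamma>2 * 0"
    by (rule partA[OF prob meas_U meas_W meas_Y21 meas_Y12 Yp0 int_W int_Y12 iYp0 cons pos0])
       (use L NC1 B in auto)
  have tau: "ACPE M Y12p 1 0 = \<gamma>2"
    unfolding ACPE_def using A1 A0 by (simp add: Bochner_Integration.integral_diff[OF iYp1 iYp0])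
  define T where "T = (\<lambda>a b. {x\<in>space M. Y21 x = a \<and> Z x = b})"
  have lin: "cexp_event M Y12 (T a b) = \<gamma>0 + \<gamma>1 * cexp_event M W (T a b) + \<gamma>2 * a"
    if ab: "a \<in> {0,1}" "b \<in> {0,1}" for a b
  proof -
    have Ba: "AE x in M. Y21 x = a \<longrightarrow>
              cexp M Y12 (\<lambda>x. (Y21 x, U x)) (borel \<Otimes>\<^sub>M N) x
            = cexp M (\<lambda>x. \<gamma>0 + \<gamma>1 * W x + \<gamma>2 * a) (\<lambda>x. (Y21 x, U x)) (borel \<Otimes>\<^sub>M N) x"
      using B ab by auto
    note eq = partB[OF prob meas_U meas_W meas_Z meas_Y21 meas_Y12 int_W int_Y12 NC2 NC3 Ba, of b]
    have Ppos: "measure M (T a b) > 0" using positivity_YZ ab by (auto simp: T_def)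
    show ?thesis using eq Ppos unfolding cexp_event_def T_def
      by (simp add: field_simps)
  qed
  have swap: "{x\<in>space M. Z x = c \<and> Y21 x = d} = T d c" for c d by (auto simp: T_def)
  have PZ: "measure M {x\<in>space M. Z x = 0} + measure M {x\<in>space M. Z x = 1} = 1"
  proof -
    have "measure M ({x\<in>space M. Z x = 0} \<union> {x\<in>space M. Z x = 1}) = measure M {x\<in>space M. Z x = 0} + measure M {x\<in>space M. Z x = 1}"
      by (rule finite_measure_Union) (use meas_Z in \<open>auto\<close>)
    moreover have "{x\<in>space M. Z x = 0} \<union> {x\<in>space M. Z x = 1} = space M" using bin_Z by auto
    ultimately show ?thesis by (simp add: prob_space)
  qed
  have E1: "expected_OD M Y12 Y21 Z = \<gamma>1 * expected_OD M W Y21 Z + \<gamma>2"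
  proof -
    let ?P0 = "measure M {x\<in>space M. Z x = 0}" and ?P1 = "measure M {x\<in>space M. Z x = 1}"
    have g: "\<gamma>2 = ?P0 * \<gamma>2 + ?P1 * \<gamma>2" proof -
      have "\<gamma>2 = \<gamma>2 * (?P0 + ?P1)" using PZ by simp
      then show ?thesis by (simp add: algebra_simps)
    qed
    show ?thesis
      unfolding expected_OD_def OD_def
      using lin[of 1 0, unfolded T_def] lin[of 0 0, unfolded T_def] lin[of 1 1, unfolded T_def] lin[of 0 1, unfolded T_def]
      apply simp
      apply (subst (3) g)
      by (simp add: algebra_simps)
  qed
  have E2: "expected_OD M Y12 Z Y21 = \<gamma>1 * expected_OD M W Z Y21"
    unfolding expected_OD_def OD_def swap
    using lin[of 1 0] lin[of 0 0] lin[of 1 1] lin[of 0 1]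
    by (simp add: algebra_simps)
  show ?thesis using tau E1 E2 nonzero by (simp add: field_simps)
qed

end
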